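(* Let $p$ be a prime and $Q\in\mathbb{Q}_p[X_1,\dots,X_n]$ any quadratic form. Then: (i) each of the sets $Q(\mathbb{Q}_p^n)\setminus\{0\}$ and $R(Q(\mathbb{Q}_p^n))\setminus\{0\}$ is a union of cosets of $(\mathbb{Q}_p^* )^2$ in $\mathbb{Q}_p^*$ (i.e. of elements of $\mathbb{Q}_p^*/(\mathbb{Q}_p^* )^2$); (ii) the set $R(Q(\mathbb{Z}^n))$ is dense in $\mathbb{Q}_p$ if and only if $R(Q(\mathbb{Q}_p^n))=\mathbb{Q}_p$.
   Context: A quadratic form is a homogeneous polynomial of degree two, not all coefficients zero. $\mathbb{Q}_p^*$ is the multiplicative group of $\mathbb{Q}_p$ and $(\mathbb{Q}_p^* )^2$ its subgroup of nonzero squares. For a subset $A$ of a field, $R(A)=\{a/b: a,b\in A,\ b\neq 0\}$. For $S\subseteq\mathbb{Q}_p^n$, $Q(S)=\{Q(\mathbf{x}):\mathbf{x}\in S\}$. Density is with respect to the $p$-adic topology. *)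

theory Defs
  imports "HOL-Computational_Algebra.Computational_Algebra"
begin

definition padic_abs_rat :: "nat \<Rightarrow> rat \<Rightarrow> real" where
  "padic_abs_rat p q =
     (if q = 0 then 0
      else (let (a, b) = quotient_of q in
            real p powr (real (multiplicity (int p) b) - real (multiplicity (int p) a))))"

text \<open>This characterizes
  the completion Q_p of Q w.r.t. the p-adic absolute value (up to isometric
  isomorphism).\<close>
definition is_Qp :: "nat \<Rightarrow> ('a::field_char_0 \<Rightarrow> real) \<Rightarrow> bool" where
  "is_Qp p N \<longleftrightarrow>
     (\<forall>x. N x \<ge> 0 \<and> (N x = 0 \<longleftrightarrow> x = 0)) \<and>
     (\<forall>x y. N (x * y) = N x * N y) \<and>
     (\<forall>x y. N (x + y) \<le> N x + N y) \<and>
     (\<forall>q. N (of_rat q) = padic_abs_rat p q) \<and>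
     (\<forall>X :: nat \<Rightarrow> 'a.
        (\<forall>e>0. \<exists>M. \<forall>m\<ge>M. \<forall>k\<ge>M. N (X m - X k) < e) \<longrightarrow>
        (\<exists>L. \<forall>e>0. \<exists>M. \<forall>m\<ge>M. N (X m - L) < e)) \<and>
     (\<forall>x e. e > 0 \<longrightarrow> (\<exists>q. N (x - of_rat q) < e))"

definition qform :: "nat \<Rightarrow> (nat \<Rightarrow> nat \<Rightarrow> 'a::comm_ring_1) \<Rightarrow> (nat \<Rightarrow> 'a) \<Rightarrow> 'a" where
  "qform n c x = (\<Sum>i<n. \<Sum>j\<in>{i..<n}. c i j * x i * x j)"

definition nonzero_qform :: "nat \<Rightarrow> (nat \<Rightarrow> nat \<Rightarrow> 'a::zero) \<Rightarrow> bool" where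
  "nonzero_qform n c \<longleftrightarrow> (\<exists>i j. i \<le> j \<and> j < n \<and> c i j \<noteq> 0)"

definition ratio_set :: "'a::field set \<Rightarrow> 'a set" where
  "ratio_set A = {a / b | a b. a \<in> A \<and> b \<in> A \<and> b \<noteq> 0}"

definition union_sq_cosets :: "'a::field set \<Rightarrow> bool" where
  "union_sq_cosets S \<longleftrightarrow> 0 \<notin> S \<and> (\<forall>s\<in>S. \<forall>t. t \<noteq> 0 \<longrightarrow> s * t\<^sup>2 \<in> S)"

definition dense_wrt :: "('a::ab_group_add \<Rightarrow> real) \<Rightarrow> 'a set \<Rightarrow> bool" where
  "dense_wrt N S \<longleftrightarrow> (\<forall>x e. e > 0 \<longrightarrow> (\<exists>s\<in>S. N (x - s) < e))"

end

theory Submission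
  imports Defs
begin

locale absv =
  fixes N :: "'a::field_char_0 \<Rightarrow> real"
  assumes nonneg: "\<And>x. N x \<ge> 0"
    and zero_iff: "\<And>x. N x = 0 \<longleftrightarrow> x = 0"
    and mult: "\<And>x y. N (x * y) = N x * N y"
    and tri: "\<And>x y. N (x + y) \<le> N x + N y"
    and complete: "\<And>X :: nat \<Rightarrow> 'a.
        (\<forall>e>0. \<exists>M. \<forall>m\<ge>M. \<forall>k\<ge>M. N (X m - X k) < e) \<Longrightarrow>
        (\<exists>L. \<forall>e>0. \<exists>M. \<forall>m\<ge>M. N (X m - L) < e)"
    and dense_rat: "\<And>x e. e > 0 \<Longrightarrow> (\<exists>q. N (x - of_rat q) < e)"
begin

lemma N_zero[simp]: "N 0 = 0" using zero_iff by simp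

lemma N_one: "N 1 = 1"
proof -
  have "N 1 = N 1 * N 1" using mult[of 1 1] by simp
  moreover have "N 1 \<noteq> 0" using zero_iff by simp
  ultimately show ?thesis by (metis mult_cancel_left1)
qed

lemma N_minus: "N (- x) = N x"
proof -
  have "N (-1) * N (-1) = 1" using mult[of "-1" "-1"] N_one by simp
  hence "N (-1) = 1" using nonneg[of "-1"]
    by (metis abs_of_nonneg abs_square_eq_1 power2_eq_square)
  thus ?thesis using mult[of "-1" x] by simp
qed

lemma N_sub_comm: "N (x - y) = N (y - x)"
  using N_minus[of "x - y"] by simp

lemma tri_sub: "N (x - z) \<le> N (x - y) + N (y - z)"
  using tri[of "x - y" "y - z"] by simp

lemma N_diff_ge: "N x - N y \<le> N (x - y)"
  using tri[of "x - y" y] by simp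

lemma N_divide: "N (x / y) = N x / N y"
proof (cases "y = 0")
  case True thus ?thesis by simp
next
  case False
  have "N x = N (x / y) * N y" using mult[of "x/y" y] False by simp
  moreover have "N y > 0" using False zero_iff nonneg by (metis less_eq_real_def)
  ultimately show ?thesis by simp
qed

lemma N_pos: "x \<noteq> 0 \<Longrightarrow> N x > 0"
  using zero_iff nonneg by (metis less_eq_real_def)

definition conv :: "(nat \<Rightarrow> 'a) \<Rightarrow> 'a \<Rightarrow> bool" where
  "conv X L \<longleftrightarrow> (\<forall>e>0. \<exists>M. \<forall>m\<ge>M. N (X m - L) < e)"

lemma conv_const: "conv (\<lambda>m. a) a"
  unfolding conv_def by simp

lemma conv_add:
  assumes "conv X L" "conv Y K" shows "conv (\<lambda>m. X m + Y m) (L + K)"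
  unfolding conv_def
proof (intro allI impI)
  fix e :: real assume e: "e > 0"
  obtain M1 where M1: "\<forall>m\<ge>M1. N (X m - L) < e/2" using assms(1) e unfolding conv_def by (meson half_gt_zero)
  obtain M2 where M2: "\<forall>m\<ge>M2. N (Y m - K) < e/2" using assms(2) e unfolding conv_def by (meson half_gt_zero)
  show "\<exists>M. \<forall>m\<ge>M. N (X m + Y m - (L + K)) < e"
  proof (intro exI allI impI)
    fix m assume "m \<ge> max M1 M2"
    hence "N (X m - L) < e/2" "N (Y m - K) < e/2" using M1 M2 by auto
    moreover have "N (X m + Y m - (L + K)) \<le> N (X m - L) + N (Y m - K)"
      using tri[of "X m - L" "Y m - K"] by (simp add: algebra_simps)
    ultimately show "N (X m + Y m - (L + K)) < e" by linarith
  qed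
qed

lemma conv_bounded:
  assumes "conv X L" shows "\<exists>B>0. \<exists>M. \<forall>m\<ge>M. N (X m) \<le> B"
proof -
  obtain M where M: "\<forall>m\<ge>M. N (X m - L) < 1" using assms unfolding conv_def by force
  have "\<forall>m\<ge>M. N (X m) \<le> N L + 1"
  proof (intro allI impI)
    fix m assume "m \<ge> M"
    hence "N (X m - L) < 1" using M by auto
    moreover have "N (X m) \<le> N (X m - L) + N L" using tri[of "X m - L" L] by simp
    ultimately show "N (X m) \<le> N L + 1" by linarith
  qed
  moreover have "N L + 1 > 0" using nonneg[of L] by linarith
  ultimately show ?thesis by blast
qed

lemma conv_mult:
  assumes "conv X L" "conv Y K" shows "conv (\<lambda>m. X m * Y m) (L * K)"
  unfolding conv_def
proof (intro allI impI)
  fix e :: real assume e: "e > 0"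
  obtain B M0 where B: "B > 0" and M0: "\<forall>m\<ge>M0. N (X m) \<le> B" using conv_bounded[OF assms(1)] by blast
  define C where "C = N K + 1"
  have C: "C > 0" using nonneg[of K] C_def by linarith
  obtain M1 where M1: "\<forall>m\<ge>M1. N (X m - L) < e/(2*C)" using assms(1) e C unfolding conv_def
    by (metis divide_pos_pos half_gt_zero mult_pos_pos zero_less_numeral)
  obtain M2 where M2: "\<forall>m\<ge>M2. N (Y m - K) < e/(2*B)" using assms(2) e B unfolding conv_def
    by (metis divide_pos_pos half_gt_zero mult_pos_pos zero_less_numeral)
  show "\<exists>M. \<forall>m\<ge>M. N (X m * Y m - L * K) < e"
  proof (intro exI allI impI)
    fix m assume "m \<ge> max M0 (max M1 M2)"
    hence h: "N (X m) \<le> B" "N (X m - L) < e/(2*C)" "N (Y m - K) < e/(2*B)" using M0 M1 M2 B by auto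
    have "X m * Y m - L * K = X m * (Y m - K) + (X m - L) * K" by (simp add: algebra_simps)
    hence "N (X m * Y m - L * K) \<le> N (X m) * N (Y m - K) + N (X m - L) * N K"
      using tri mult by metis
    also have "\<dots> \<le> B * N (Y m - K) + N (X m - L) * C"
      apply (intro add_mono mult_mono)
      using h nonneg C_def B by auto
    also have "\<dots> < B * (e/(2*B)) + (e/(2*C)) * C"
      apply (intro add_strict_mono mult_strict_left_mono mult_strict_right_mono)
      using h B C by auto
    also have "\<dots> = e" using B C by simp
    finally show "N (X m * Y m - L * K) < e" .
  qed
qed

lemma conv_sum:
  assumes "finite A" "\<And>i. i \<in> A \<Longrightarrow> conv (X i) (L i)"
  shows "conv (\<lambda>m. \<Sum>i\<in>A. X i m) (\<Sum>i\<in>A. L i)"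
  using assms
proof (induction A rule: finite_induct)
  case empty thus ?case using conv_const by simp
next
  case (insert a A)
  thus ?case using conv_add[of "X a" "L a"] by simp
qed

lemma conv_inverse:
  assumes "conv X L" "L \<noteq> 0" shows "conv (\<lambda>m. inverse (X m)) (inverse L)"
  unfolding conv_def
proof (intro allI impI)
  fix e :: real assume e: "e > 0"
  have NL: "N L > 0" using N_pos assms(2) by simp
  obtain M1 where M1: "\<forall>m\<ge>M1. N (X m - L) < N L / 2" using assms(1) NL unfolding conv_def by (meson half_gt_zero)
  obtain M2 where M2: "\<forall>m\<ge>M2. N (X m - L) < e * (N L * N L / 2)" using assms(1) e NL unfolding conv_def
    by (metis divide_pos_pos half_gt_zero mult_pos_pos zero_less_numeral)
  show "\<exists>M. \<forall>m\<ge>M. N (inverse (X m) - inverse L) < e"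
  proof (intro exI allI impI)
    fix m assume "m \<ge> max M1 M2"
    hence h: "N (X m - L) < N L / 2" "N (X m - L) < e * (N L * N L / 2)" using M1 M2 by auto
    have "N L - N (X m) \<le> N (L - X m)" by (rule N_diff_ge)
    hence XL: "N (X m) > N L / 2" using h N_sub_comm[of "X m" L] by linarith
    hence Xm: "X m \<noteq> 0" using zero_iff by (metis NL half_gt_zero not_less_iff_gr_or_eq)
    have "inverse (X m) - inverse L = (L - X m) / (X m * L)" using Xm assms(2) by (simp add: field_simps)
    hence "N (inverse (X m) - inverse L) = N (X m - L) / (N (X m) * N L)"
      using N_divide mult N_sub_comm by metis
    also have "\<dots> \<le> N (X m - L) / (N L / 2 * N L)"
      apply (rule divide_left_mono) using XL NL nonneg by (auto intro: mult_right_mono)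
    also have "\<dots> < e" using h(2) NL by (simp add: field_simps)
    finally show "N (inverse (X m) - inverse L) < e" .
  qed
qed

lemma conv_divide:
  assumes "conv X L" "conv Y K" "K \<noteq> 0" shows "conv (\<lambda>m. X m / Y m) (L / K)"
  using conv_mult[OF assms(1) conv_inverse[OF assms(2,3)]] by (simp add: divide_inverse)


lemma geom_small:
  fixes C e :: real assumes "C \<ge> 0" "e > 0"
  shows "\<exists>M. \<forall>m\<ge>M. C / 2^m < e"
proof -
  obtain M where M: "(1/2::real)^M < e / (C + 1)"
    using real_arch_pow_inv[of "e/(C+1)" "1/2"] assms by auto
  have "\<forall>m\<ge>M. C / 2^m < e"
  proof (intro allI impI)
    fix m :: nat assume "m \<ge> M"
    hence "(1/2::real)^m \<le> (1/2)^M" by (simp add: power_decreasing)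
    hence "(1/2::real)^m < e / (C + 1)" using M by linarith
    hence "(C+1) * (1/2::real)^m < e" using assms by (simp add: field_simps)
    moreover have "C / 2^m \<le> (C+1) * (1/2::real)^m" by (simp add: field_simps)
    ultimately show "C / 2^m < e" by linarith
  qed
  thus ?thesis by blast
qed

lemma conv_unique: "conv X a \<Longrightarrow> conv X b \<Longrightarrow> a = b"
proof (rule ccontr)
  assume a: "conv X a" "conv X b" "a \<noteq> b"
  hence e: "N (a - b) / 2 > 0" using N_pos by simp
  obtain M1 where M1: "\<forall>m\<ge>M1. N (X m - a) < N (a - b) / 2" using a(1) e unfolding conv_def by blast
  obtain M2 where M2: "\<forall>m\<ge>M2. N (X m - b) < N (a - b) / 2" using a(2) e unfolding conv_def by blast
  have "N (X (max M1 M2) - a) < N (a - b) / 2" "N (X (max M1 M2) - b) < N (a - b) / 2" using M1 M2 by auto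
  moreover have "N (a - b) \<le> N (a - X (max M1 M2)) + N (X (max M1 M2) - b)" by (rule tri_sub)
  ultimately show False using N_sub_comm[of a "X (max M1 M2)"] by linarith
qed

lemma sq_near_one: "\<exists>\<delta>>0. \<forall>u. N (u - 1) < \<delta> \<longrightarrow> (\<exists>t. u = t * t)"
proof -
  define h where "h = N 2"
  have h: "h > 0" using N_pos h_def by simp
  define r where "r = h / 4"
  have r: "r > 0" using h r_def by simp
  have "\<forall>u. N (u - 1) < h*h/8 \<longrightarrow> (\<exists>t. u = t * t)"
  proof (intro allI impI)
    fix u assume u: "N (u - 1) < h*h/8"
    define f where "f t = t - (t*t - u)/2" for t
    have A: "N (f t - 1) \<le> r" if "N (t - 1) \<le> r" for t
    proof -
      have "f t - 1 = ((u - 1) - (t-1)*(t-1)) / 2" unfolding f_def by (simp add: field_simps)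
      hence "N (f t - 1) = N ((u - 1) - (t-1)*(t-1)) / h" by (metis N_divide h_def)
      also have "\<dots> \<le> (N (u - 1) + N (t-1) * N (t-1)) / h"
        apply (rule divide_right_mono)
        using tri[of "u-1" "-((t-1)*(t-1))"] N_minus mult h by auto
      also have "\<dots> \<le> (h*h/8 + r * r) / h"
        apply (rule divide_right_mono)
        using u that nonneg h r by (auto intro!: add_mono mult_mono)
      also have "\<dots> \<le> r" using h unfolding r_def by (simp add: field_simps)
      finally show ?thesis .
    qed
    have B: "N (f t - f s) \<le> N (t - s) / 2" if "N (t - 1) \<le> r" "N (s - 1) \<le> r" for t s
    proof -
      have "f t - f s = (t - s) * ((1 - t) + (1 - s)) / 2" unfolding f_def by (simp add: field_simps)
      hence "N (f t - f s) = N (t - s) * N ((1 - t) + (1 - s)) / h" by (metis N_divide mult h_def)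
      also have "\<dots> \<le> N (t - s) * (r + r) / h"
        apply (intro divide_right_mono mult_left_mono)
        using tri[of "1-t" "1-s"] that N_sub_comm[of t 1] N_sub_comm[of s 1] nonneg h by auto
      also have "\<dots> = N (t - s) / 2" using h unfolding r_def by (simp add: field_simps)
      finally show ?thesis .
    qed
    define T where "T k = (f ^^ k) 1" for k
    have TS: "T (Suc k) = f (T k)" for k unfolding T_def by simp
    have ball: "N (T k - 1) \<le> r" for k
      by (induction k) (use r A TS in \<open>auto simp: T_def\<close>)
    have step: "N (T (Suc k) - T k) \<le> r / 2^k" for k
    proof (induction k)
      case 0
      have "N (T 1 - T 0) \<le> r" using ball[of 1] by (simp add: T_def)
      thus ?case by simp
    next
      case (Suc k)
      have "N (T (Suc (Suc k)) - T (Suc k)) \<le> N (T (Suc k) - T k) / 2"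
        using B[OF ball ball, of "Suc k" k] unfolding TS[symmetric] .
      also have "\<dots> \<le> r / 2^Suc k" using Suc by simp
      finally show ?case .
    qed
    have cauchy1: "N (T (k + j) - T k) \<le> 2*r/2^k - 2*r/2^(k+j)" for k j
    proof (induction j)
      case 0 thus ?case by simp
    next
      case (Suc j)
      have "N (T (Suc (k + j)) - T k) \<le> N (T (Suc (k + j)) - T (k + j)) + N (T (k + j) - T k)"
        by (rule tri_sub)
      also have "\<dots> \<le> r / 2^(k+j) + (2*r/2^k - 2*r/2^(k+j))" using step[of "k+j"] Suc.IH by (rule add_mono)
      also have "\<dots> = 2*r/2^k - 2*r/2^(k + Suc j)"
      proof -
        have "(2::real)^(k + Suc j) = 2 * 2^(k+j)" by simp
        hence "2*r/2^(k + Suc j) = r/2^(k+j)" by simp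
        thus ?thesis by linarith
      qed
      finally show ?case unfolding add_Suc_right .
    qed
    have cauchy2: "N (T m - T k) \<le> 2*r/2^k" if mk: "m \<ge> k" for m k
    proof -
      obtain j where j: "m = k + j" using le_Suc_ex[OF mk] by blast
      have "2*r/2^(k+j) \<ge> 0" using r by simp
      hence "N (T (k + j) - T k) \<le> 2*r/2^k" using cauchy1[where k=k and j=j] by linarith
      thus ?thesis unfolding j .
    qed
    have "\<forall>e>0. \<exists>M. \<forall>m\<ge>M. \<forall>k\<ge>M. N (T m - T k) < e"
    proof (intro allI impI)
      fix e :: real assume e: "e > 0"
      obtain M where M: "\<forall>m\<ge>M. 2*r / 2^m < e" using geom_small[of "2*r" e] r e by auto
      have "N (T m - T k) < e" if "m \<ge> M" "k \<ge> M" for m k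
      proof (cases "m \<ge> k")
        case True
        have "2*r/2^k < e" using M that by blast
        thus ?thesis using cauchy2[OF True] by linarith
      next
        case False
        have "2*r/2^m < e" using M that by blast
        thus ?thesis using cauchy2[where m=k and k=m] False N_sub_comm[of "T m" "T k"] by linarith
      qed
      thus "\<exists>M. \<forall>m\<ge>M. \<forall>k\<ge>M. N (T m - T k) < e" by blast
    qed
    then obtain L where L: "conv T L" using complete unfolding conv_def by blast
    have c1: "conv (\<lambda>k. T k * T k) (L * L)" using conv_mult[OF L L] .
    have c2: "conv (\<lambda>k. T k * T k) u"
      unfolding conv_def
    proof (intro allI impI)
      fix e :: real assume e: "e > 0"
      obtain M where M: "\<forall>m\<ge>M. h*r / 2^m < e" using geom_small[of "h*r" e] r h e by auto
      have "N (T k * T k - u) \<le> h * r / 2^k" for k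
      proof -
        have eq: "T k * T k - u = 2 * (T k - T (Suc k))" using TS unfolding f_def by (simp add: field_simps)
        have "N (T k * T k - u) = h * N (T k - T (Suc k))" unfolding eq h_def by (rule mult)
        hence "N (T k * T k - u) = h * N (T (Suc k) - T k)" using N_sub_comm by simp
        also have "\<dots> \<le> h * (r / 2^k)" using step h by (intro mult_left_mono) auto
        finally show ?thesis by simp
      qed
      hence "\<forall>m\<ge>M. N (T m * T m - u) < e" using M by (meson order_le_less_trans)
      thus "\<exists>M. \<forall>m\<ge>M. N (T m * T m - u) < e" by blast
    qed
    show "\<exists>t. u = t * t" using conv_unique[OF c2 c1] by blast
  qed
  moreover have "h*h/8 > 0" using h by simp
  ultimately show ?thesis by blast
qed


lemma approx_rat: "\<exists>q :: nat \<Rightarrow> nat \<Rightarrow> rat. \<forall>i. conv (\<lambda>m. of_rat (q m i)) (w i)"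
proof -
  have "\<forall>m i. \<exists>r. N (w i - of_rat r) < 1 / (real m + 1)"
    using dense_rat by simp
  then obtain q where q: "\<forall>m i. N (w i - of_rat (q m i)) < 1 / (real m + 1)" by metis
  have "conv (\<lambda>m. of_rat (q m i)) (w i)" for i
    unfolding conv_def
  proof (intro allI impI)
    fix e :: real assume e: "e > 0"
    obtain M where M: "M > 0" "inverse (real M) < e" using ex_inverse_of_nat_less e by blast
    have "N (of_rat (q m i) - w i) < e" if mM: "m \<ge> M" for m
    proof -
      have "1 / (real m + 1) \<le> 1 / real M" using mM M(1) by (simp add: frac_le)
      hence "1 / (real m + 1) < e" using M(2) by (simp add: inverse_eq_divide)
      moreover have "N (w i - of_rat (q m i)) < 1 / (real m + 1)" using q by blast
      ultimately show ?thesis using N_sub_comm[of "of_rat (q m i)" "w i"] by linarith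
    qed
    thus "\<exists>M. \<forall>m\<ge>M. N (of_rat (q m i) - w i) < e" by blast
  qed
  thus ?thesis by blast
qed

lemma conv_qform:
  assumes "\<And>i. conv (\<lambda>m. X m i) (w i)"
  shows "conv (\<lambda>m. qform n c (X m)) (qform n c w)"
  unfolding qform_def
  by (intro conv_sum conv_mult conv_const assms) auto

end

lemma qform_scale: "qform n c (\<lambda>i. t * x i) = t^2 * qform n c x"
  unfolding qform_def power2_eq_square
  by (simp add: sum_distrib_left algebra_simps)

lemma qform_cong: "(\<And>i. i < n \<Longrightarrow> x i = y i) \<Longrightarrow> qform n c x = qform n c y"
  unfolding qform_def by (intro sum.cong refl) auto

lemma qform_zero: "qform n c (\<lambda>i. 0) = 0"
  unfolding qform_def by simp

lemma common_denom: "\<exists>d::int. d > 0 \<and> (\<exists>z::nat \<Rightarrow> int. \<forall>i<n. of_int d * (q::nat \<Rightarrow> rat) i = of_int (z i))"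
proof (induction n)
  case 0 thus ?case by (intro exI[of _ 1]) auto
next
  case (Suc n)
  then obtain d z where d: "d > 0" "\<forall>i<n. of_int d * q i = of_int (z i)" by blast
  obtain a b where ab: "quotient_of (q n) = (a, b)" by fastforce
  have b: "b > 0" using quotient_of_denom_pos[OF ab] .
  have qn: "q n = of_int a / of_int b" using quotient_of_div[OF ab] .
  define z' where "z' i = (if i < n then z i * b else d * a)" for i
  have "\<forall>i<Suc n. of_int (d * b) * q i = of_int (z' i)"
  proof (intro allI impI)
    fix i assume i: "i < Suc n"
    show "of_int (d * b) * q i = of_int (z' i)"
    proof (cases "i < n")
      case True
      have "of_int (d * b) * q i = (of_int d * q i) * of_int b" by simp
      also have "\<dots> = of_int (z i * b)" using d True by simp
      finally show ?thesis using True z'_def by simp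
    next
      case False
      hence "i = n" using i by simp
      thus ?thesis using b qn z'_def by simp
    qed
  qed
  moreover have "d * b > 0" using d b by simp
  ultimately show ?case by blast
qed

lemma qform_int_rat:
  assumes "\<forall>i<n. of_int d * q i = of_int (z i)"
  shows "qform n c (\<lambda>i. (of_int (z i) :: 'a::field_char_0)) = (of_int d)^2 * qform n c (\<lambda>i. of_rat (q i))"
proof -
  have "qform n c (\<lambda>i. (of_int (z i) :: 'a)) = qform n c (\<lambda>i. of_int d * of_rat (q i))"
  proof (rule qform_cong)
    fix i assume "i < n"
    hence "of_rat (of_int (z i)) = (of_rat (of_int d * q i) :: 'a)" using assms by simp
    thus "(of_int (z i) :: 'a) = of_int d * of_rat (q i)" by (simp add: of_rat_mult)
  qed
  thus ?thesis using qform_scale by metis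
qed

lemma ratio_mono: "A \<subseteq> B \<Longrightarrow> ratio_set A \<subseteq> ratio_set B"
  unfolding ratio_set_def by blast

lemma union_range: "union_sq_cosets (range (qform n c) - {0})"
  unfolding union_sq_cosets_def
proof (intro conjI ballI allI impI)
  fix s t :: 'a assume s: "s \<in> range (qform n c) - {0}" and t: "t \<noteq> 0"
  then obtain x where x: "s = qform n c x" by auto
  have "s * t^2 = qform n c (\<lambda>i. t * x i)" unfolding x qform_scale by (simp add: mult.commute)
  thus "s * t^2 \<in> range (qform n c) - {0}" using s t by auto
qed simp

lemma union_ratio: "union_sq_cosets (ratio_set (range (qform n c)) - {0})"
  unfolding union_sq_cosets_def
proof (intro conjI ballI allI impI)
  fix s t :: 'a assume s: "s \<in> ratio_set (range (qform n c)) - {0}" and t: "t \<noteq> 0"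
  then obtain x b where x: "s = qform n c x / b" "b \<in> range (qform n c)" "b \<noteq> 0"
    unfolding ratio_set_def by auto
  have "s * t^2 = qform n c (\<lambda>i. t * x i) / b" unfolding x(1) qform_scale by (simp add: mult.commute)
  thus "s * t^2 \<in> ratio_set (range (qform n c)) - {0}" using s t x unfolding ratio_set_def by auto
qed simp


context absv
begin

lemma imp_dense:
  assumes all: "ratio_set (range (qform n c)) = UNIV"
  shows "dense_wrt N (ratio_set ((\<lambda>z. qform n c (\<lambda>i. of_int (z i))) ` UNIV))"
  unfolding dense_wrt_def
proof (intro allI impI)
  fix x :: 'a and e :: real assume e: "e > 0"
  have "x \<in> ratio_set (range (qform n c))" using all by simp
  then obtain u v where uv: "x = qform n c u / qform n c v" "qform n c v \<noteq> 0"
    unfolding ratio_set_def by auto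
  obtain qu where qu: "\<forall>i. conv (\<lambda>m. of_rat (qu m i)) (u i)" using approx_rat by blast
  obtain qv where qv: "\<forall>i. conv (\<lambda>m. of_rat (qv m i)) (v i)" using approx_rat by blast
  have cu: "conv (\<lambda>m. qform n c (\<lambda>i. of_rat (qu m i))) (qform n c u)"
    by (rule conv_qform) (use qu in simp)
  have cv: "conv (\<lambda>m. qform n c (\<lambda>i. of_rat (qv m i))) (qform n c v)"
    by (rule conv_qform) (use qv in simp)
  have cd: "conv (\<lambda>m. qform n c (\<lambda>i. of_rat (qu m i)) / qform n c (\<lambda>i. of_rat (qv m i))) x"
    unfolding uv(1) by (rule conv_divide[OF cu cv uv(2)])
  have Nb: "N (qform n c v) > 0" using N_pos uv(2) by simp
  obtain M1 where M1: "\<forall>m\<ge>M1. N (qform n c (\<lambda>i. of_rat (qv m i)) - qform n c v) < N (qform n c v)"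
    using cv Nb unfolding conv_def by blast
  obtain M2 where M2: "\<forall>m\<ge>M2. N (qform n c (\<lambda>i. of_rat (qu m i)) / qform n c (\<lambda>i. of_rat (qv m i)) - x) < e"
    using cd e unfolding conv_def by blast
  define m where "m = max M1 M2"
  define A where "A = qform n c (\<lambda>i. of_rat (qu m i))"
  define B where "B = qform n c (\<lambda>i. of_rat (qv m i))"
  have B0: "B \<noteq> 0"
  proof
    assume "B = 0"
    moreover have "N (B - qform n c v) < N (qform n c v)" using M1 unfolding m_def B_def by simp
    ultimately show False using N_minus by simp
  qed
  have "N (A / B - x) < e" using M2 unfolding m_def A_def B_def by simp
  hence close: "N (x - A / B) < e" using N_sub_comm by metis
  obtain d1 z1 where d1: "d1 > (0::int)" "\<forall>i<n. of_int d1 * qu m i = of_int (z1 i)"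
    using common_denom by blast
  obtain d2 z2 where d2: "d2 > (0::int)" "\<forall>i<n. of_int d2 * qv m i = of_int (z2 i)"
    using common_denom by blast
  define d where "d = d1 * d2"
  have h1: "\<forall>i<n. of_int d * qu m i = of_int (z1 i * d2)"
    using d1 unfolding d_def by (simp add: algebra_simps)
  have h2: "\<forall>i<n. of_int d * qv m i = of_int (z2 i * d1)"
    using d2 unfolding d_def by (simp add: algebra_simps)
  have dA: "qform n c (\<lambda>i. (of_int (z1 i * d2) :: 'a)) = (of_int d)^2 * A"
    using qform_int_rat[OF h1] unfolding A_def .
  have dB: "qform n c (\<lambda>i. (of_int (z2 i * d1) :: 'a)) = (of_int d)^2 * B"
    using qform_int_rat[OF h2] unfolding B_def .
  have dnz: "(of_int d :: 'a) \<noteq> 0" using d1 d2 unfolding d_def by simp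
  have "A / B = qform n c (\<lambda>i. (of_int (z1 i * d2) :: 'a)) / qform n c (\<lambda>i. (of_int (z2 i * d1) :: 'a))"
    unfolding dA dB using dnz by simp
  moreover have "qform n c (\<lambda>i. (of_int (z2 i * d1) :: 'a)) \<noteq> 0" using dB dnz B0 by simp
  moreover have "qform n c (\<lambda>i. of_int (z1 i * d2)) \<in> range (\<lambda>z. qform n c (\<lambda>i. (of_int (z i) :: 'a)))"
    using rangeI[of "\<lambda>z. qform n c (\<lambda>i. (of_int (z i) :: 'a))" "\<lambda>i. z1 i * d2"] by simp
  moreover have "qform n c (\<lambda>i. of_int (z2 i * d1)) \<in> range (\<lambda>z. qform n c (\<lambda>i. (of_int (z i) :: 'a)))"
    using rangeI[of "\<lambda>z. qform n c (\<lambda>i. (of_int (z i) :: 'a))" "\<lambda>i. z2 i * d1"] by simp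
  ultimately have "A / B \<in> ratio_set ((\<lambda>z. qform n c (\<lambda>i. of_int (z i))) ` UNIV)"
    unfolding ratio_set_def by blast
  thus "\<exists>s\<in>ratio_set ((\<lambda>z. qform n c (\<lambda>i. of_int (z i))) ` UNIV). N (x - s) < e"
    using close by blast
qed

lemma dense_imp:
  assumes dn: "dense_wrt N (ratio_set ((\<lambda>z. qform n c (\<lambda>i. of_int (z i))) ` UNIV))"
  shows "ratio_set (range (qform n c)) = UNIV"
proof -
  have sub: "ratio_set ((\<lambda>z. qform n c (\<lambda>i. of_int (z i))) ` UNIV) \<subseteq> ratio_set (range (qform n c))"
    by (rule ratio_mono) auto
  have "x \<in> ratio_set (range (qform n c))" for x
  proof (cases "x = 0")
    case True
    obtain s where "s \<in> ratio_set (range (qform n c))"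
      using dn sub unfolding dense_wrt_def by (meson subsetD zero_less_one)
    then obtain b where b: "b \<in> range (qform n c)" "b \<noteq> 0" unfolding ratio_set_def by auto
    have "0 = qform n c (\<lambda>i. 0) / b" by (simp add: qform_def)
    thus ?thesis using True b unfolding ratio_set_def by blast
  next
    case False
    obtain \<delta> where dl: "\<delta> > 0" "\<forall>u. N (u - 1) < \<delta> \<longrightarrow> (\<exists>t. u = t * t)"
      using sq_near_one by blast
    have Nx: "N x > 0" using N_pos False by simp
    define e where "e = min \<delta> 1 * N x"
    have e: "e > 0" using dl Nx e_def by simp
    obtain s where s: "s \<in> ratio_set (range (qform n c))" "N (x - s) < e"
      using dn sub e unfolding dense_wrt_def by blast
    have "e \<le> N x" using Nx unfolding e_def by (simp add: mult_left_le_one_le)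
    hence s0: "s \<noteq> 0" using s by auto
    have "s / x - 1 = (s - x) / x" using False by (simp add: field_simps)
    hence "N (s / x - 1) = N (s - x) / N x" using N_divide by simp
    also have "\<dots> < \<delta>"
    proof -
      have "min \<delta> 1 * N x \<le> \<delta> * N x" using Nx by (intro mult_right_mono) auto
      hence "N (s - x) < \<delta> * N x" using s(2) N_sub_comm[of s x] unfolding e_def by linarith
      thus ?thesis using Nx by (simp add: pos_divide_less_eq)
    qed
    finally have "N (s / x - 1) < \<delta>" .
    then obtain t where t: "s / x = t * t" using dl by blast
    have t0: "t \<noteq> 0" using t s0 False by auto
    have "x = s * (inverse t)^2" using t t0 False by (simp add: field_simps power2_eq_square)
    moreover have "s \<in> ratio_set (range (qform n c)) - {0}" using s s0 by simp
    ultimately have "x \<in> ratio_set (range (qform n c)) - {0}"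
      using union_ratio[of n c] t0 unfolding union_sq_cosets_def by (metis inverse_nonzero_iff_nonzero)
    thus ?thesis by simp
  qed
  thus ?thesis by blast
qed

end

theorem lemma3:
  fixes p :: nat and N :: "'a::field_char_0 \<Rightarrow> real"
    and n :: nat and c :: "nat \<Rightarrow> nat \<Rightarrow> 'a"
  assumes "prime p"
    and "is_Qp p N"
    and "nonzero_qform n c"
  shows "union_sq_cosets (range (qform n c) - {0})
       \<and> union_sq_cosets (ratio_set (range (qform n c)) - {0})
       \<and> (dense_wrt N (ratio_set ((\<lambda>z. qform n c (\<lambda>i. of_int (z i))) ` UNIV))
            \<longleftrightarrow> ratio_set (range (qform n c)) = UNIV)"
proof -
  interpret absv N
    using assms(2) unfolding is_Qp_def by unfold_locales blast+
  show ?thesis using union_range union_ratio imp_dense dense_imp by blast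
qed

end
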